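(* Let $r_1,r_2,\mu,a_{12},a_{13},a_{21},a_{31},d$ be positive with $r_1>a_{12}$ and $a_{31}>\mu$, let $c>c_*:=2\sqrt{d(a_{31}-\mu)}$ and $\rho=c^2/d$. Consider the system in $\mathbb{R}^4$ \[ \dot X_1=X_1\big(r_1(1-X_1)-a_{12}X_2-a_{13}Y\big),\quad \dot X_2=X_2\big(r_2(1-X_2)+a_{21}X_1\big),\quad \dot Y=\rho(Y-Z),\quad \dot Z=Y(-\mu+a_{31}X_1), \] with flow $\Phi_t$. Let \[ \sigma_1=\frac{\rho+\sqrt{\rho^2-4\rho(a_{31}-\mu)}}{2\rho},\qquad \sigma_2=\frac{\rho+\sqrt{\rho^2+4\rho\mu}}{2\rho}, \] \[ \Sigma=\Big\{(X_1,X_2,Y,Z):0\le X_1\le1,\ 0\le X_2\le 1+\tfrac{a_{21}}{r_2},\ Y\ge0,\ \sigma_1Y\le Z\le\sigma_2Y\Big\}, \] and let $Q_1,\dots,Q_5\subset\partial\Sigma$ be $Q_1=\Sigma\cap\{X_1=0\}$, $Q_2=\Sigma\cap\{X_1=1\}$, $Q_3=\Sigma\cap\{X_2=0\}$, $Q_4=\Sigma\cap\{X_2=1+a_{21}/r_2\}$, $Q_5=\{0<X_1<1,\ 0<X_2<1+a_{21}/r_2,\ Y=Z=0\}$. Then for any $p$ in the interior of $\Sigma$, the trajectory $\Phi_t(p)$ cannot leave $\Sigma$ through a point of $Q_1\cup Q_2\cup Q_3\cup Q_4\cup Q_5$ at any positive time.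
   Context: This system arises from traveling wave profiles $(U,V,W)(x+ct)$ of the reaction-diffusion system $u_t=r_1u(1-u)-a_{12}uv-a_{13}uw$, $v_t=r_2v(1-v)+a_{21}uv$, $w_t=d w_{xx}-\mu w+a_{31}uw$ via $X_1(t)=U(ct)$, $X_2(t)=V(ct)$, $Y(t)=W(ct)$, $Z(t)=W(ct)-\frac{d}{c}W'(ct)$. For $c>c_*$ one has $0<\sigma_1<1<\sigma_2$. *)

theory Defs
  imports "HOL-Analysis.Analysis"
begin

type_synonym state = "real \<times> real \<times> real \<times> real"

definition rho :: "real \<Rightarrow> real \<Rightarrow> real" where
  "rho c d = c\<^sup>2 / d"

definition sigma1 :: "real \<Rightarrow> real \<Rightarrow> real \<Rightarrow> real" where
  "sigma1 \<rho> a31 \<mu> = (\<rho> + sqrt (\<rho>\<^sup>2 - 4 * \<rho> * (a31 - \<mu>))) / (2 * \<rho>)"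

definition sigma2 :: "real \<Rightarrow> real \<Rightarrow> real" where
  "sigma2 \<rho> \<mu> = (\<rho> + sqrt (\<rho>\<^sup>2 + 4 * \<rho> * \<mu>)) / (2 * \<rho>)"

definition vf :: "real \<Rightarrow> real \<Rightarrow> real \<Rightarrow> real \<Rightarrow> real \<Rightarrow> real \<Rightarrow> real \<Rightarrow> real \<Rightarrow> state \<Rightarrow> state" where
  "vf r1 r2 \<mu> a12 a13 a21 a31 \<rho> = (\<lambda>(x1, x2, y, z).
     (x1 * (r1 * (1 - x1) - a12 * x2 - a13 * y),
      x2 * (r2 * (1 - x2) + a21 * x1),
      \<rho> * (y - z),
      y * (- \<mu> + a31 * x1)))"

definition SigmaSet :: "real \<Rightarrow> real \<Rightarrow> real \<Rightarrow> real \<Rightarrow> state set" where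
  "SigmaSet r2 a21 s1 s2 = {(x1, x2, y, z). 0 \<le> x1 \<and> x1 \<le> 1 \<and> 0 \<le> x2 \<and> x2 \<le> 1 + a21 / r2
      \<and> y \<ge> 0 \<and> s1 * y \<le> z \<and> z \<le> s2 * y}"

definition Qset :: "real \<Rightarrow> real \<Rightarrow> real \<Rightarrow> real \<Rightarrow> state set" where
  "Qset r2 a21 s1 s2 =
     (SigmaSet r2 a21 s1 s2 \<inter> {(x1, x2, y, z). x1 = 0})
   \<union> (SigmaSet r2 a21 s1 s2 \<inter> {(x1, x2, y, z). x1 = 1})
   \<union> (SigmaSet r2 a21 s1 s2 \<inter> {(x1, x2, y, z). x2 = 0})
   \<union> (SigmaSet r2 a21 s1 s2 \<inter> {(x1, x2, y, z). x2 = 1 + a21 / r2})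
   \<union> {(x1, x2, y, z). 0 < x1 \<and> x1 < 1 \<and> 0 < x2 \<and> x2 < 1 + a21 / r2 \<and> y = 0 \<and> z = 0}"

end

theory Submission
  imports Defs
begin

lemma pos_lemma:
  fixes f f' :: "real \<Rightarrow> real"
  assumes "0 \<le> T" "\<forall>t\<in>{0..T}. (f has_real_derivative f' t) (at t)"
    "\<forall>t\<in>{0..T}. f' t \<ge> - K * f t" "f 0 > 0"
  shows "f T > 0"
proof -
  define h where "h = (\<lambda>t. f t * exp (K * t))"
  have "h 0 \<le> h T"
  proof (rule DERIV_nonneg_imp_nondecreasing[OF assms(1)])
    fix t assume t: "0 \<le> t" "t \<le> T"
    have ft: "(f has_real_derivative f' t) (at t)" using assms(2) t by simp
    have d: "(h has_real_derivative (f' t * exp (K*t) + f t * (exp (K*t) * K))) (at t)"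
      unfolding h_def by (rule derivative_eq_intros ft refl)+ simp
    have "- K * f t \<le> f' t" using assms(3) t by simp
    hence "f' t + K * f t \<ge> 0" by linarith
    hence "0 \<le> exp (K*t) * (f' t + K * f t)" by simp
    hence "0 \<le> f' t * exp (K*t) + f t * (exp (K*t) * K)" by (simp add: algebra_simps)
    with d show "\<exists>y. (h has_real_derivative y) (at t) \<and> 0 \<le> y" by blast
  qed
  moreover have "h 0 = f 0" by (simp add: h_def)
  ultimately have "0 < f T * exp (K*T)" using assms(4) unfolding h_def by simp
  thus ?thesis by (simp add: zero_less_mult_iff)
qed

lemma interior_pos:
  fixes p :: state
  assumes "p \<in> interior S" "S \<subseteq> {q. 0 \<le> fst q}" "S \<subseteq> {q. 0 \<le> fst (snd q)}"
    "S \<subseteq> {q. 0 \<le> fst (snd (snd q))}"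
  shows "fst p > 0 \<and> fst (snd p) > 0 \<and> fst (snd (snd p)) > 0"
proof -
  obtain e where e: "e > 0" "ball p e \<subseteq> S" using assms(1) mem_interior by blast
  obtain a b c w where p: "p = (a,b,c,w)" by (cases p) auto
  have de: "dist (a,b,c,w) (a - e/2, b, c, w) < e" "dist (a,b,c,w) (a, b - e/2, c, w) < e"
    "dist (a,b,c,w) (a, b, c - e/2, w) < e"
    using e by (simp_all add: dist_Pair_Pair dist_real_def)
  have "(a - e/2, b, c, w) \<in> S" using de(1) e(2) p by (simp add: subset_iff)
  hence "0 \<le> fst (a - e/2, b, c, w)" using assms(2) by blast
  hence 1: "a - e/2 \<ge> 0" by simp
  have "(a, b - e/2, c, w) \<in> S" using de(2) e(2) p by (simp add: subset_iff)
  hence "0 \<le> fst (snd (a, b - e/2, c, w))" using assms(3) by blast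
  hence 2: "b - e/2 \<ge> 0" by simp
  have "(a, b, c - e/2, w) \<in> S" using de(3) e(2) p by (simp add: subset_iff)
  hence "0 \<le> fst (snd (snd (a, b, c - e/2, w)))" using assms(4) by blast
  hence 3: "c - e/2 \<ge> 0" by simp
  show ?thesis using 1 2 3 e p by simp
qed

theorem lemma4:
  fixes r1 r2 \<mu> a12 a13 a21 a31 d c :: real
    and x :: "real \<Rightarrow> state" and J :: "real set"
  assumes "r1 > 0" "r2 > 0" "\<mu> > 0" "a12 > 0" "a13 > 0" "a21 > 0" "a31 > 0" "d > 0"
    and "r1 > a12" "a31 > \<mu>"
    and "c > 2 * sqrt (d * (a31 - \<mu>))"
    and "open J" "is_interval J" "0 \<in> J"
    and "\<forall>t\<in>J. (x has_vector_derivative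
            vf r1 r2 \<mu> a12 a13 a21 a31 (rho c d) (x t)) (at t)"
    and "x 0 \<in> interior (SigmaSet r2 a21 (sigma1 (rho c d) a31 \<mu>) (sigma2 (rho c d) \<mu>))"
  shows "\<not> (\<exists>T>0. T \<in> J
            \<and> x ` {0..T} \<subseteq> SigmaSet r2 a21 (sigma1 (rho c d) a31 \<mu>) (sigma2 (rho c d) \<mu>)
            \<and> x T \<in> Qset r2 a21 (sigma1 (rho c d) a31 \<mu>) (sigma2 (rho c d) \<mu>)
            \<and> (\<forall>\<epsilon>>0. \<exists>t\<in>J. T < t \<and> t < T + \<epsilon>
                 \<and> x t \<notin> SigmaSet r2 a21 (sigma1 (rho c d) a31 \<mu>) (sigma2 (rho c d) \<mu>)))"
proof
  define \<rho> where "\<rho> = rho c d"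
  define s1 where "s1 = sigma1 (rho c d) a31 \<mu>"
  define s2 where "s2 = sigma2 (rho c d) \<mu>"
  define M where "M = 1 + a21 / r2"
  define S where "S = SigmaSet r2 a21 s1 s2"
  define x1 where "x1 = (\<lambda>t. fst (x t))"
  define x2 where "x2 = (\<lambda>t. fst (snd (x t)))"
  define y where "y = (\<lambda>t. fst (snd (snd (x t))))"
  define z where "z = (\<lambda>t. snd (snd (snd (x t))))"
  have xe: "x t = (x1 t, x2 t, y t, z t)" for t by (simp add: x1_def x2_def y_def z_def)
  have "sqrt (d * (a31 - \<mu>)) \<ge> 0" using assms(8,10) by simp
  hence cpos: "c > 0" using assms(11) by linarith
  have rpos: "\<rho> > 0" using cpos assms(8) by (simp add: \<rho>_def rho_def)
  have vfe: "vf r1 r2 \<mu> a12 a13 a21 a31 \<rho> (x t) =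
     (x1 t * (r1 * (1 - x1 t) - a12 * x2 t - a13 * y t),
      x2 t * (r2 * (1 - x2 t) + a21 * x1 t),
      \<rho> * (y t - z t),
      y t * (- \<mu> + a31 * x1 t))" for t
    by (simp add: vf_def xe)
  have D: "\<forall>t\<in>J. (x has_vector_derivative vf r1 r2 \<mu> a12 a13 a21 a31 \<rho> (x t)) (at t)"
    using assms(15) by (simp add: \<rho>_def)
  have d1: "(x1 has_real_derivative x1 t * (r1 * (1 - x1 t) - a12 * x2 t - a13 * y t)) (at t)"
    if "t \<in> J" for t
    using bounded_linear.has_vector_derivative[OF bounded_linear_fst D[rule_format, OF that]]
    unfolding has_real_derivative_iff_has_vector_derivative x1_def vfe by (simp add: x1_def)
  have d2: "(x2 has_real_derivative x2 t * (r2 * (1 - x2 t) + a21 * x1 t)) (at t)"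
    if "t \<in> J" for t
    using bounded_linear.has_vector_derivative[OF bounded_linear_fst
        bounded_linear.has_vector_derivative[OF bounded_linear_snd D[rule_format, OF that]]]
    unfolding has_real_derivative_iff_has_vector_derivative x2_def vfe by (simp add: x2_def)
  have d3: "(y has_real_derivative \<rho> * (y t - z t)) (at t)"
    if "t \<in> J" for t
    using bounded_linear.has_vector_derivative[OF bounded_linear_fst
        bounded_linear.has_vector_derivative[OF bounded_linear_snd
        bounded_linear.has_vector_derivative[OF bounded_linear_snd D[rule_format, OF that]]]]
    unfolding has_real_derivative_iff_has_vector_derivative y_def vfe by (simp add: y_def)
  have x0: "x1 0 > 0 \<and> x2 0 > 0 \<and> y 0 > 0"
  proof -
    have "S \<subseteq> {q. 0 \<le> fst q}" "S \<subseteq> {q. 0 \<le> fst (snd q)}" "S \<subseteq> {q. 0 \<le> fst (snd (snd q))}"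
      unfolding S_def SigmaSet_def by auto
    moreover have "x 0 \<in> interior S" using assms(16) unfolding S_def s1_def s2_def .
    ultimately show ?thesis using interior_pos[of "x 0" S] unfolding x1_def x2_def y_def by blast
  qed
  assume "\<exists>T>0. T \<in> J \<and> x ` {0..T} \<subseteq> SigmaSet r2 a21 (sigma1 (rho c d) a31 \<mu>) (sigma2 (rho c d) \<mu>)
            \<and> x T \<in> Qset r2 a21 (sigma1 (rho c d) a31 \<mu>) (sigma2 (rho c d) \<mu>)
            \<and> (\<forall>\<epsilon>>0. \<exists>t\<in>J. T < t \<and> t < T + \<epsilon>
                 \<and> x t \<notin> SigmaSet r2 a21 (sigma1 (rho c d) a31 \<mu>) (sigma2 (rho c d) \<mu>))"
  then obtain T where T: "T > 0" "T \<in> J" "x ` {0..T} \<subseteq> S" "x T \<in> Qset r2 a21 s1 s2"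
    unfolding S_def s1_def s2_def by blast
  have sub: "{0..T} \<subseteq> J"
  proof
    fix t assume t: "t \<in> {0..T}"
    have "\<forall>a\<in>J. \<forall>b\<in>J. \<forall>x. a \<le> x \<and> x \<le> b \<longrightarrow> x \<in> J"
      using assms(13) unfolding is_interval_1 .
    moreover have "0 \<le> t" "t \<le> T" using t atLeastAtMost_iff by blast+
    ultimately show "t \<in> J" using assms(14) T(2) by blast
  qed
  have inS: "0 \<le> x1 t \<and> x1 t \<le> 1 \<and> 0 \<le> x2 t \<and> x2 t \<le> M \<and> 0 \<le> y t \<and> s1 * y t \<le> z t \<and> z t \<le> s2 * y t"
    if "t \<in> {0..T}" for t
  proof -
    have "x t \<in> S" using T(3) that by blast
    hence "(x1 t, x2 t, y t, z t) \<in> S" by (simp only: xe)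
    thus ?thesis unfolding S_def SigmaSet_def M_def by simp
  qed
  have cont: "continuous_on {0..T} x"
  proof (rule continuous_at_imp_continuous_on, rule ballI)
    fix t assume "t \<in> {0..T}"
    hence "t \<in> J" using sub by blast
    thus "isCont x t" using has_vector_derivative_continuous D by blast
  qed
  have "bounded (x ` {0..T})" by (rule compact_imp_bounded[OF compact_continuous_image[OF cont compact_Icc]])
  then obtain B where B: "\<forall>t\<in>{0..T}. norm (x t) \<le> B" unfolding bounded_iff by auto
  have yB: "y t \<le> B" if "t \<in> {0..T}" for t
  proof -
    have "y t \<le> norm (y t)" by simp
    also have "\<dots> \<le> norm (snd (snd (x t)))" unfolding y_def by (metis norm_fst_le prod.collapse)
    also have "\<dots> \<le> norm (snd (x t))" by (metis norm_snd_le prod.collapse)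
    also have "\<dots> \<le> norm (x t)" by (metis norm_snd_le prod.collapse)
    moreover have "norm (x t) \<le> B" using B that by blast
    ultimately show ?thesis by linarith
  qed
  have x2T: "x2 T > 0"
  proof -
    have A: "\<forall>t\<in>{0..T}. (x2 has_real_derivative x2 t * (r2 * (1 - x2 t) + a21 * x1 t)) (at t)"
      using d2 sub by auto
    have C: "\<forall>t\<in>{0..T}. x2 t * (r2 * (1 - x2 t) + a21 * x1 t) \<ge> - a21 * x2 t"
    proof
      fix t assume t: "t \<in> {0..T}"
      have "r2 * (1 - x2 t) \<ge> r2 * (1 - M)" using inS[OF t] assms(2) by (simp add: mult_left_mono)
      also have "r2 * (1 - M) = - a21" using assms(2) by (simp add: M_def field_simps)
      finally have f: "- a21 \<le> r2 * (1 - x2 t)" .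
      have "a21 * x1 t \<ge> 0" using inS[OF t] assms(6) by simp
      hence "r2 * (1 - x2 t) + a21 * x1 t + a21 \<ge> 0" using f by linarith
      hence "x2 t * (r2 * (1 - x2 t) + a21 * x1 t + a21) \<ge> 0" using inS[OF t] by simp
      thus "x2 t * (r2 * (1 - x2 t) + a21 * x1 t) \<ge> - a21 * x2 t" by (simp add: algebra_simps)
    qed
    show ?thesis using pos_lemma[OF _ A C] T x0 by auto
  qed
  have x1T: "x1 T > 0"
  proof -
    have A: "\<forall>t\<in>{0..T}. (x1 has_real_derivative x1 t * (r1 * (1 - x1 t) - a12 * x2 t - a13 * y t)) (at t)"
      using d1 sub by auto
    have C: "\<forall>t\<in>{0..T}. x1 t * (r1 * (1 - x1 t) - a12 * x2 t - a13 * y t) \<ge> - (a12 * M + a13 * B) * x1 t"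
    proof
      fix t assume t: "t \<in> {0..T}"
      have "r1 * (1 - x1 t) \<ge> 0" using inS[OF t] assms(1) by simp
      moreover have "a12 * x2 t \<le> a12 * M" using inS[OF t] assms(4) by simp
      moreover have "a13 * y t \<le> a13 * B" using yB[OF t] assms(5) by simp
      ultimately have "r1 * (1 - x1 t) - a12 * x2 t - a13 * y t + (a12 * M + a13 * B) \<ge> 0" by linarith
      hence "x1 t * (r1 * (1 - x1 t) - a12 * x2 t - a13 * y t + (a12 * M + a13 * B)) \<ge> 0" using inS[OF t] by simp
      thus "x1 t * (r1 * (1 - x1 t) - a12 * x2 t - a13 * y t) \<ge> - (a12 * M + a13 * B) * x1 t" by (simp add: algebra_simps)
    qed
    show ?thesis using pos_lemma[OF _ A C] T x0 by auto
  qed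
  have yT: "y T > 0"
  proof -
    have A: "\<forall>t\<in>{0..T}. (y has_real_derivative \<rho> * (y t - z t)) (at t)"
      using d3 sub by auto
    have C: "\<forall>t\<in>{0..T}. \<rho> * (y t - z t) \<ge> - (\<rho> * s2) * y t"
    proof
      fix t assume t: "t \<in> {0..T}"
      have "\<rho> * z t \<le> \<rho> * (s2 * y t)" using inS[OF t] rpos by simp
      moreover have "\<rho> * y t \<ge> 0" using inS[OF t] rpos by simp
      ultimately show "\<rho> * (y t - z t) \<ge> - (\<rho> * s2) * y t" by (simp add: algebra_simps)
    qed
    show ?thesis using pos_lemma[OF _ A C] T x0 by auto
  qed
  have x1ne: "x1 T \<noteq> 1"
  proof
    assume e: "x1 T = 1"
    have "x1 T * (r1 * (1 - x1 T) - a12 * x2 T - a13 * y T) < 0"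
    proof -
      have "a12 * x2 T > 0" "a13 * y T > 0" using x2T yT assms(4,5) by simp_all
      thus ?thesis using e by simp
    qed
    from DERIV_neg_dec_left[OF d1[OF T(2)] this] obtain h0 where
      h0: "h0 > 0" "\<forall>h>0. h < h0 \<longrightarrow> x1 T < x1 (T - h)" by blast
    define h where "h = min (h0/2) T"
    have "h > 0" "h < h0" using h0 T by (auto simp: h_def)
    hence "x1 (T - h) > 1" using h0 e by auto
    moreover have "T - h \<in> {0..T}" using \<open>h > 0\<close> T by (auto simp: h_def)
    ultimately show False using inS[of "T - h"] by auto
  qed
  have x2ne: "x2 T \<noteq> M"
  proof
    assume e: "x2 T = M"
    have "x1 T < 1" using inS[of T] T x1ne by auto
    have "r2 * (1 - M) + a21 * x1 T = a21 * (x1 T - 1)" using assms(2) by (simp add: M_def field_simps)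
    moreover have "a21 * (x1 T - 1) < 0" using \<open>x1 T < 1\<close> assms(6) by (simp add: mult_pos_neg)
    ultimately have "x2 T * (r2 * (1 - x2 T) + a21 * x1 T) < 0"
      using e x2T by (simp add: mult_pos_neg)
    from DERIV_neg_dec_left[OF d2[OF T(2)] this] obtain h0 where
      h0: "h0 > 0" "\<forall>h>0. h < h0 \<longrightarrow> x2 T < x2 (T - h)" by blast
    define h where "h = min (h0/2) T"
    have "h > 0" "h < h0" using h0 T by (auto simp: h_def)
    hence "x2 (T - h) > M" using h0 e by auto
    moreover have "T - h \<in> {0..T}" using \<open>h > 0\<close> T by (auto simp: h_def)
    ultimately show False using inS[of "T - h"] by auto
  qed
  show False using T(4) x1T x2T yT x1ne x2ne
    unfolding Qset_def M_def by (auto simp: xe)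
qed

end
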